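(* Let $\xi$ be a real random variable such that either $\mathbb{E}\xi^2=\infty$, or $\mathbb{E}\xi^2<\infty$ and $\mathbb{E}\xi\neq0$. Let $\varepsilon\in(0,1)$ and $M>0$. Then there exists $n_0$, depending only on $\varepsilon$, $M$ and the distribution of $\xi$, such that for every $n>n_0$ the following holds: if $A$ is an $n\times n$ random matrix whose entries are i.i.d. copies of $\xi$, then with probability at least $1-e^{-n}$, every submatrix $A'=(A_{ij})_{i\in I,j\in J}$ of $A$ with $I,J\subset[n]$, $|I|\ge(1-\varepsilon)n$ and $|J|\ge(1-\varepsilon)n$ satisfies $\|A'\|\ge M\sqrt n$.
   Context: $\|\cdot\|$ denotes the operator norm (Euclidean norm to Euclidean norm). *)

theory Defs
  imports "HOL-Probability.Probability"
begin

text \<open>Vectors are functions nat => real,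
  only the coordinates in J matter.\<close>
definition submatrix_opnorm :: "(nat \<times> nat \<Rightarrow> real) \<Rightarrow> nat set \<Rightarrow> nat set \<Rightarrow> real" where
  "submatrix_opnorm a I J =
     (SUP x \<in> {x :: nat \<Rightarrow> real. (\<Sum>j\<in>J. (x j)\<^sup>2) = 1}.
        sqrt (\<Sum>i\<in>I. (\<Sum>j\<in>J. a (i, j) * x j)\<^sup>2))"

definition iid_matrix :: "real measure \<Rightarrow> nat \<Rightarrow> (nat \<times> nat \<Rightarrow> real) measure" where
  "iid_matrix \<mu> n = PiM ({..<n} \<times> {..<n}) (\<lambda>_. \<mu>)"

end

theory Submission
  imports Defs
begin

definition gfun :: "(nat \<times> nat \<Rightarrow> real) \<Rightarrow> nat set \<Rightarrow> nat set \<Rightarrow> (nat \<Rightarrow> real) \<Rightarrow> real" where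
  "gfun a I J x = L2_set (\<lambda>i. \<Sum>j\<in>J. a (i, j) * x j) I"

definition frob :: "(nat \<times> nat \<Rightarrow> real) \<Rightarrow> nat set \<Rightarrow> nat set \<Rightarrow> real" where
  "frob a I J = L2_set (\<lambda>i. L2_set (\<lambda>j. a (i, j)) J) I"

lemma opnorm_alt: "submatrix_opnorm a I J = (SUP x \<in> {x. L2_set x J = 1}. gfun a I J x)"
proof -
  have "{x :: nat \<Rightarrow> real. (\<Sum>j\<in>J. (x j)\<^sup>2) = 1} = {x. L2_set x J = 1}"
    by (auto simp: L2_set_def)
  then show ?thesis unfolding submatrix_opnorm_def gfun_def L2_set_def by simp
qed

lemma gfun_le_frob:
  assumes "finite I" "finite J"
  shows "gfun a I J x \<le> frob a I J * L2_set x J"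
proof -
  have "\<bar>\<Sum>j\<in>J. a (i, j) * x j\<bar> \<le> L2_set (\<lambda>j. a (i, j)) J * L2_set x J" for i
  proof -
    have "\<bar>\<Sum>j\<in>J. a (i, j) * x j\<bar> \<le> (\<Sum>j\<in>J. \<bar>a (i, j)\<bar> * \<bar>x j\<bar>)"
      by (rule order_trans[OF sum_abs]) (simp add: abs_mult)
    also have "\<dots> \<le> L2_set (\<lambda>j. a (i, j)) J * L2_set x J" by (rule L2_set_mult_ineq)
    finally show ?thesis .
  qed
  moreover have "gfun a I J x = L2_set (\<lambda>i. \<bar>\<Sum>j\<in>J. a (i, j) * x j\<bar>) I"
    unfolding gfun_def L2_set_def by simp
  ultimately have "gfun a I J x \<le> L2_set (\<lambda>i. L2_set (\<lambda>j. a (i, j)) J * L2_set x J) I"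
    by (simp add: L2_set_mono)
  also have "\<dots> = frob a I J * L2_set x J"
    unfolding frob_def by (simp add: L2_set_left_distrib)
  finally show ?thesis .
qed

lemma gfun_nonneg: "0 \<le> gfun a I J x" by (simp add: gfun_def)

lemma bdd_gfun:
  assumes "finite I" "finite J"
  shows "bdd_above (gfun a I J ` {x. L2_set x J = 1})"
proof (intro bdd_aboveI[of _ "frob a I J"])
  fix y assume "y \<in> gfun a I J ` {x. L2_set x J = 1}"
  then obtain x where "L2_set x J = 1" "y = gfun a I J x" by auto
  then show "y \<le> frob a I J" using gfun_le_frob[OF assms, of a x] by simp
qed

lemma gfun_le_opnorm:
  assumes "finite I" "finite J" "L2_set x J = 1"
  shows "gfun a I J x \<le> submatrix_opnorm a I J"
  unfolding opnorm_alt using assms by (intro cSUP_upper bdd_gfun) auto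

lemma col_le_opnorm:
  assumes "finite I" "finite J" "j \<in> J"
  shows "L2_set (\<lambda>i. a (i, j)) I \<le> submatrix_opnorm a I J"
proof -
  define x where "x = (\<lambda>k. if k = j then 1 else (0::real))"
  have s: "(\<Sum>k\<in>J. a (i, k) * x k) = a (i, j)" for i
    using assms by (simp add: x_def if_distrib sum.delta cong: if_cong)
  have "L2_set x J = 1"
  proof -
    have "(\<Sum>k\<in>J. (x k)\<^sup>2) = (\<Sum>k\<in>J. if k = j then 1 else 0)"
      by (intro sum.cong) (auto simp: x_def)
    then show ?thesis using assms unfolding L2_set_def by simp
  qed
  then have "gfun a I J x \<le> submatrix_opnorm a I J" using assms by (intro gfun_le_opnorm) auto
  then show ?thesis unfolding gfun_def s .
qed

lemma sum_le_opnorm: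
  assumes "finite I" "finite J" "J \<noteq> {}"
  shows "\<bar>\<Sum>i\<in>I. \<Sum>j\<in>J. a (i, j)\<bar> \<le> submatrix_opnorm a I J * sqrt (real (card I) * real (card J))"
proof -
  define c where "c = 1 / sqrt (real (card J))"
  have cJ: "card J > 0" using assms by auto
  define x where "x = (\<lambda>k::nat. c)"
  have "L2_set x J = 1"
    using cJ unfolding L2_set_constant x_def c_def by simp
  then have le: "gfun a I J x \<le> submatrix_opnorm a I J" using assms by (intro gfun_le_opnorm) auto
  have "\<bar>\<Sum>i\<in>I. \<Sum>j\<in>J. a (i, j) * x j\<bar> \<le> (\<Sum>i\<in>I. \<bar>\<Sum>j\<in>J. a (i, j) * x j\<bar> * \<bar>1\<bar>)"
    by (simp add: sum_abs)
  also have "\<dots> \<le> gfun a I J x * L2_set (\<lambda>_. 1::real) I"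
    unfolding gfun_def by (rule L2_set_mult_ineq)
  also have "\<dots> \<le> submatrix_opnorm a I J * sqrt (real (card I))"
    using le by (simp add: L2_set_constant mult_right_mono)
  finally have *: "\<bar>\<Sum>i\<in>I. \<Sum>j\<in>J. a (i, j) * x j\<bar> \<le> submatrix_opnorm a I J * sqrt (real (card I))" .
  have "(\<Sum>i\<in>I. \<Sum>j\<in>J. a (i, j) * x j) = c * (\<Sum>i\<in>I. \<Sum>j\<in>J. a (i, j))"
    by (simp add: x_def sum_distrib_left sum_distrib_right mult.commute)
  with * have "c * \<bar>\<Sum>i\<in>I. \<Sum>j\<in>J. a (i, j)\<bar> \<le> submatrix_opnorm a I J * sqrt (real (card I))"
    using cJ by (simp add: abs_mult c_def)
  then have "\<bar>\<Sum>i\<in>I. \<Sum>j\<in>J. a (i, j)\<bar> \<le> submatrix_opnorm a I J * sqrt (real (card I)) * sqrt (real (card J))"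
    using cJ by (simp add: c_def field_simps)
  then show ?thesis by (simp add: real_sqrt_mult mult.assoc)
qed

definition Qset :: "nat set \<Rightarrow> (nat \<Rightarrow> real) set" where
  "Qset J = (\<lambda>r j. if j \<in> J then r j else 0) ` (PiE J (\<lambda>_. \<rat>))"

definition Ffun :: "(nat \<times> nat \<Rightarrow> real) \<Rightarrow> nat set \<Rightarrow> nat set \<Rightarrow> (nat \<Rightarrow> real) \<Rightarrow> real" where
  "Ffun a I J y = (if L2_set y J = 0 then 0 else gfun a I J y / L2_set y J)"

lemma countable_Qset: "finite J \<Longrightarrow> countable (Qset J)"
  unfolding Qset_def by (intro countable_image countable_PiE countable_rat)

lemma L2_set_scale: "L2_set (\<lambda>j. c * y j) J = \<bar>c\<bar> * L2_set y J"
  unfolding L2_set_def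
  by (simp add: power_mult_distrib real_sqrt_mult sum_distrib_left[symmetric])

lemma gfun_scale: "gfun a I J (\<lambda>j. c * y j) = \<bar>c\<bar> * gfun a I J y"
proof -
  have "(\<Sum>j\<in>J. a (i, j) * (c * y j)) = c * (\<Sum>j\<in>J. a (i, j) * y j)" for i
    by (simp add: sum_distrib_left mult_ac)
  then show ?thesis unfolding gfun_def by (simp add: L2_set_scale)
qed

lemma gfun_triangle: "gfun a I J x \<le> gfun a I J y + gfun a I J (\<lambda>j. x j - y j)"
proof -
  have "(\<Sum>j\<in>J. a (i, j) * x j) = (\<Sum>j\<in>J. a (i, j) * y j) + (\<Sum>j\<in>J. a (i, j) * (x j - y j))" for i
    by (simp add: sum.distrib[symmetric] algebra_simps)
  then show ?thesis unfolding gfun_def by (simp add: L2_set_triangle_ineq)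
qed

lemma L2_triangle_diff: "L2_set x J \<le> L2_set y J + L2_set (\<lambda>j. x j - y j) J"
proof -
  have "L2_set x J = L2_set (\<lambda>j. y j + (x j - y j)) J" by simp
  also have "\<dots> \<le> L2_set y J + L2_set (\<lambda>j. x j - y j) J" by (rule L2_set_triangle_ineq)
  finally show ?thesis .
qed

lemma frob_nonneg: "0 \<le> frob a I J" by (simp add: frob_def)

lemma Ffun_le_frob:
  assumes "finite I" "finite J"
  shows "Ffun a I J y \<le> frob a I J"
proof (cases "L2_set y J = 0")
  case True then show ?thesis by (simp add: Ffun_def frob_nonneg)
next
  case False
  then have pos: "L2_set y J > 0" using L2_set_nonneg[of y J] by linarith
  have "gfun a I J y \<le> frob a I J * L2_set y J" by (rule gfun_le_frob[OF assms])
  then show ?thesis using False pos by (simp add: Ffun_def divide_le_eq)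
qed

lemma Ffun_nonneg: "0 \<le> Ffun a I J y"
  by (simp add: Ffun_def gfun_nonneg)

lemma sphere_nonempty:
  assumes "finite J" "J \<noteq> {}"
  shows "L2_set (\<lambda>_. 1 / sqrt (real (card J))) J = 1"
  using assms by (simp add: L2_set_constant)

lemma opnorm_nonneg:
  assumes "finite I" "finite J" "J \<noteq> {}"
  shows "0 \<le> submatrix_opnorm a I J"
  using gfun_le_opnorm[OF assms(1,2) sphere_nonempty[OF assms(2,3)], of a] gfun_nonneg[of a I J "\<lambda>_. 1 / sqrt (real (card J))"]
  by linarith

lemma Ffun_le_opnorm:
  assumes "finite I" "finite J" "J \<noteq> {}"
  shows "Ffun a I J y \<le> submatrix_opnorm a I J"
proof (cases "L2_set y J = 0")
  case True then show ?thesis using opnorm_nonneg[OF assms] by (simp add: Ffun_def)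
next
  case False
  then have pos: "L2_set y J > 0" using L2_set_nonneg[of y J] by linarith
  define x where "x = (\<lambda>j. (1 / L2_set y J) * y j)"
  have "L2_set x J = 1" using pos unfolding x_def L2_set_scale by simp
  then have "gfun a I J x \<le> submatrix_opnorm a I J" using assms by (intro gfun_le_opnorm) auto
  moreover have "gfun a I J x = gfun a I J y / L2_set y J"
    using pos unfolding x_def gfun_scale by simp
  ultimately show ?thesis using False by (simp add: Ffun_def)
qed

lemma approx_Q:
  assumes "finite I" "finite J" "J \<noteq> {}" "L2_set x J = 1" "e > 0"
  shows "\<exists>y\<in>Qset J. gfun a I J x - e \<le> Ffun a I J y"
proof (cases "gfun a I J x \<le> e")
  case True
  have "(\<lambda>j. if j \<in> J then (\<lambda>j\<in>J. 0::real) j else 0) \<in> Qset J"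
    unfolding Qset_def by (intro imageI) auto
  then show ?thesis using True Ffun_nonneg[of a I J "\<lambda>j. if j \<in> J then (\<lambda>j\<in>J. 0::real) j else 0"]
    by (intro bexI[of _ "\<lambda>j. if j \<in> J then (\<lambda>j\<in>J. 0::real) j else 0"]) auto
next
  case False
  define G where "G = gfun a I J x"
  define Fr where "Fr = frob a I J"
  have GFr: "G \<le> Fr" using gfun_le_frob[OF assms(1,2), of a x] assms(4) by (simp add: G_def Fr_def)
  have Ge: "G > e" using False by (simp add: G_def)
  define \<rho> where "\<rho> = e / (e + 2 * Fr + 2)"
  have Fr0: "Fr \<ge> 0" by (simp add: Fr_def frob_nonneg)
  have \<rho>0: "\<rho> > 0" using assms(5) Fr0 by (simp add: \<rho>_def)
  have \<rho>1: "\<rho> < 1/2"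
  proof -
    have "e < 2 * Fr + 2" using Ge GFr Fr0 by linarith
    then show ?thesis using assms(5) Fr0 by (simp add: \<rho>_def field_simps)
  qed
  have key0: "2 * Fr * \<rho> \<le> e"
  proof -
    have "2 * Fr * e \<le> e * (e + 2 * Fr + 2)" using assms(5) Fr0 by (simp add: algebra_simps)
    then show ?thesis using assms(5) Fr0 by (simp add: \<rho>_def field_simps)
  qed
  have key: "2 * (Fr * \<rho>) \<le> e" using key0 by (simp add: mult.assoc)
  define r0 where "r0 = \<rho> / real (card J)"
  have cJ: "card J > 0" using assms(2,3) by auto
  have r0: "r0 > 0" using \<rho>0 cJ by (simp add: r0_def)
  have "\<forall>j. \<exists>q. q \<in> \<rat> \<and> \<bar>q - x j\<bar> < r0"
  proof
    fix j
    obtain q where "q \<in> \<rat>" "x j - r0 < q" "q < x j + r0"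
      using Rats_dense_in_real[of "x j - r0" "x j + r0"] r0 by auto
    then show "\<exists>q. q \<in> \<rat> \<and> \<bar>q - x j\<bar> < r0" by (intro exI[of _ q]) auto
  qed
  then obtain q where q: "\<And>j. q j \<in> \<rat>" "\<And>j. \<bar>q j - x j\<bar> < r0" by metis
  define y where "y = (\<lambda>j. if j \<in> J then q j else 0)"
  have yQ: "y \<in> Qset J"
    unfolding Qset_def y_def
    by (rule image_eqI[of _ _ "restrict q J"]) (auto simp: q(1))
  have "L2_set (\<lambda>j. x j - y j) J \<le> (\<Sum>j\<in>J. \<bar>x j - y j\<bar>)" by (rule L2_set_le_sum_abs)
  also have "\<dots> \<le> (\<Sum>j\<in>J. r0)"
    by (intro sum_mono) (use q(2) in \<open>auto simp: y_def abs_minus_commute less_imp_le\<close>)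
  also have "\<dots> = \<rho>" using cJ by (simp add: r0_def)
  finally have dxy: "L2_set (\<lambda>j. x j - y j) J \<le> \<rho>" .
  have dyx: "L2_set (\<lambda>j. y j - x j) J \<le> \<rho>"
  proof -
    have "L2_set (\<lambda>j. y j - x j) J = L2_set (\<lambda>j. x j - y j) J"
      unfolding L2_set_def by (simp add: power2_commute)
    then show ?thesis using dxy by simp
  qed
  have Ly1: "L2_set y J \<le> 1 + \<rho>" using L2_triangle_diff[of y J x] dyx assms(4) by linarith
  have Ly2: "L2_set y J \<ge> 1 - \<rho>" using L2_triangle_diff[of x J y] dxy assms(4) by linarith
  have Lypos: "L2_set y J > 0" using Ly2 \<rho>1 by linarith
  have "gfun a I J (\<lambda>j. x j - y j) \<le> Fr * \<rho>"
    using gfun_le_frob[OF assms(1,2), of a "\<lambda>j. x j - y j"] dxy Fr0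
    by (simp add: Fr_def) (meson mult_left_mono order_trans)
  then have gy: "gfun a I J y \<ge> G - Fr * \<rho>"
    using gfun_triangle[of a I J x y] by (simp add: G_def)
  have "G - e \<le> (G - Fr * \<rho>) / (1 + \<rho>)"
  proof -
    have "(G - e) * (1 + \<rho>) \<le> G - Fr * \<rho>"
    proof -
      have eq: "(G - e) * (1 + \<rho>) = G - e + G * \<rho> - e * \<rho>" by (simp add: algebra_simps)
      have "G * \<rho> \<le> Fr * \<rho>" using GFr \<rho>0 by (simp add: mult_right_mono)
      moreover have "e * \<rho> \<ge> 0" using assms(5) \<rho>0 by simp
      ultimately show ?thesis unfolding eq using key by linarith
    qed
    then show ?thesis using \<rho>0 by (simp add: field_simps)
  qed
  also have "\<dots> \<le> gfun a I J y / L2_set y J"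
  proof -
    have "Fr * \<rho> \<ge> 0" using Fr0 \<rho>0 by simp
    then have nn: "G - Fr * \<rho> \<ge> 0" using key Ge by linarith
    have "(G - Fr * \<rho>) / (1 + \<rho>) \<le> (G - Fr * \<rho>) / L2_set y J"
      using nn Ly1 Lypos by (intro divide_left_mono) auto
    also have "\<dots> \<le> gfun a I J y / L2_set y J"
      using gy Lypos by (intro divide_right_mono) auto
    finally show ?thesis .
  qed
  also have "\<dots> = Ffun a I J y" using Lypos by (simp add: Ffun_def)
  finally show ?thesis using yQ by (auto simp: G_def)
qed

lemma opnorm_countable:
  assumes "finite I" "finite J" "J \<noteq> {}"
  shows "submatrix_opnorm a I J = (SUP y\<in>Qset J. Ffun a I J y)"
proof (rule antisym)
  have "(\<lambda>j\<in>J. 0::real) \<in> PiE J (\<lambda>_. \<rat>)" by auto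
  then have Qne: "Qset J \<noteq> {}" unfolding Qset_def by blast
  have bdd: "bdd_above (Ffun a I J ` Qset J)"
    using Ffun_le_frob[OF assms(1,2), of a] by (intro bdd_aboveI[of _ "frob a I J"]) auto
  show "(SUP y\<in>Qset J. Ffun a I J y) \<le> submatrix_opnorm a I J"
    using Qne Ffun_le_opnorm[OF assms] by (intro cSUP_least) auto
  show "submatrix_opnorm a I J \<le> (SUP y\<in>Qset J. Ffun a I J y)"
    unfolding opnorm_alt
  proof (rule cSUP_least)
    show "{x. L2_set x J = 1} \<noteq> {}" using sphere_nonempty[OF assms(2,3)] by auto
    fix x assume x: "x \<in> {x. L2_set x J = 1}"
    show "gfun a I J x \<le> (SUP y\<in>Qset J. Ffun a I J y)"
    proof (rule field_le_epsilon)
      fix e :: real assume e: "e > 0"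
      obtain y where y: "y \<in> Qset J" "gfun a I J x - e \<le> Ffun a I J y"
        using approx_Q[OF assms _ e, of x a] x by auto
      have "Ffun a I J y \<le> (SUP y\<in>Qset J. Ffun a I J y)" using y(1) bdd by (intro cSUP_upper)
      then show "gfun a I J x \<le> (SUP y\<in>Qset J. Ffun a I J y) + e" using y(2) by linarith
    qed
  qed
qed

lemma coord_meas:
  assumes "sets \<mu> = sets borel" "d \<in> D"
  shows "(\<lambda>a. a d) \<in> borel_measurable (PiM D (\<lambda>_. \<mu>))"
proof -
  have "(\<lambda>a. a d) \<in> measurable (PiM D (\<lambda>_. \<mu>)) \<mu>"
    using assms(2) by (rule measurable_component_singleton)
  then show ?thesis using measurable_cong_sets[OF refl assms(1)] by blast
qed

lemma opnorm_meas:
  assumes "sets \<mu> = sets borel" "finite I" "finite J" "J \<noteq> {}" "I \<times> J \<subseteq> D"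
  shows "(\<lambda>a. submatrix_opnorm a I J) \<in> borel_measurable (PiM D (\<lambda>_. \<mu>))"
proof -
  have eq: "(\<lambda>a. submatrix_opnorm a I J) = (\<lambda>a. SUP y\<in>Qset J. Ffun a I J y)"
    using opnorm_countable[OF assms(2-4)] by auto
  have cm: "(\<lambda>a. a (i, j)) \<in> borel_measurable (PiM D (\<lambda>_. \<mu>))" if "i \<in> I" "j \<in> J" for i j
    using assms(5) that by (intro coord_meas[OF assms(1)]) auto
  have gm: "(\<lambda>a. gfun a I J y) \<in> borel_measurable (PiM D (\<lambda>_. \<mu>))" for y
  proof -
    have "(\<lambda>a. \<Sum>i\<in>I. (\<Sum>j\<in>J. a (i, j) * y j)\<^sup>2) \<in> borel_measurable (PiM D (\<lambda>_. \<mu>))"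
      by (intro borel_measurable_sum borel_measurable_power borel_measurable_times
          borel_measurable_const cm) auto
    from measurable_compose[OF this borel_measurable_sqrt] show ?thesis
      unfolding gfun_def L2_set_def by (simp add: o_def)
  qed
  have Fm: "(\<lambda>a. Ffun a I J y) \<in> borel_measurable (PiM D (\<lambda>_. \<mu>))" for y
    unfolding Ffun_def using gm[of y] by (cases "L2_set y J = 0") auto
  show ?thesis unfolding eq
    by (rule borel_measurable_cSUP[OF countable_Qset[OF assms(3)] Fm])
       (use Ffun_le_frob[OF assms(2,3)] in \<open>auto intro!: bdd_aboveI\<close>)
qed

locale iidsetup =
  fixes \<mu> :: "real measure"
  assumes mu_prob: "prob_space \<mu>" and mu_sets: "sets \<mu> = sets borel"
begin

abbreviation PP :: "(nat \<times> nat) set \<Rightarrow> (nat \<times> nat \<Rightarrow> real) measure" where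
  "PP D \<equiv> PiM D (\<lambda>_. \<mu>)"

lemma PP_prob: "prob_space (PP D)"
  by (intro prob_space_PiM mu_prob)

lemma coord_indep_base:
  assumes "D \<noteq> {}"
  shows "prob_space.indep_vars (PP D) (\<lambda>_. \<mu>) (\<lambda>d a. a d) D"
proof -
  interpret P: prob_space "PP D" by (rule PP_prob)
  have rv: "(\<lambda>a. a d) \<in> measurable (PP D) \<mu>" if "d \<in> D" for d
    using that by (rule measurable_component_singleton)
  have "distr (PP D) (PP D) (\<lambda>x. \<lambda>i\<in>D. x i) = distr (PP D) (PP D) (\<lambda>x. x)"
    by (intro distr_cong) (auto simp: space_PiM)
  also have "\<dots> = PP D" by simp
  also have "\<dots> = PiM D (\<lambda>i. distr (PP D) \<mu> (\<lambda>x. x i))"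
    by (intro PiM_cong refl distr_PiM_component[symmetric] mu_prob) auto
  finally show ?thesis
    by (subst P.indep_vars_iff_distr_eq_PiM'[OF assms rv]) auto
qed

lemma coord_indep:
  assumes "g \<in> borel \<rightarrow>\<^sub>M (N :: 'b measure)" and False: "D \<noteq> {}"
  shows "prob_space.indep_vars (PP D) (\<lambda>_. N) (\<lambda>d a. g (a d)) D"
proof -
  interpret P: prob_space "PP D" by (rule PP_prob)
  have g: "g \<in> \<mu> \<rightarrow>\<^sub>M N" using assms measurable_cong_sets[OF mu_sets refl] by blast
  show ?thesis by (rule P.indep_vars_compose2[OF coord_indep_base[OF False]]) (use g in auto)
qed

lemma nn_coord:
  assumes "d \<in> D" "h \<in> borel_measurable borel"
  shows "(\<integral>\<^sup>+a. h (a d) \<partial>PP D) = (\<integral>\<^sup>+x. h x \<partial>\<mu>)"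
proof -
  have T: "(\<lambda>a. a d) \<in> measurable (PP D) \<mu>" using assms(1) by (rule measurable_component_singleton)
  have dd: "distr (PP D) \<mu> (\<lambda>a. a d) = \<mu>" by (rule distr_PiM_component) (use mu_prob assms(1) in auto)
  have h: "h \<in> borel_measurable (distr (PP D) \<mu> (\<lambda>a. a d))"
    unfolding dd using assms(2) measurable_cong_sets[OF mu_sets refl] by blast
  show ?thesis using nn_integral_distr[OF T h] unfolding dd by simp
qed

lemma chernoff:
  assumes E: "E \<subseteq> D" "finite E" and Dne: "D \<noteq> {}" and f: "f \<in> borel_measurable borel" and l: "l > 0"
    and B: "(\<integral>\<^sup>+x. ennreal (exp (l * f x)) \<partial>\<mu>) \<le> ennreal B"
  shows "measure (PP D) {a \<in> space (PP D). t \<le> (\<Sum>d\<in>E. f (a d))} \<le> exp (- l * t) * B ^ card E"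
proof -
  interpret P: prob_space "PP D" by (rule PP_prob)
  have B0: "B \<ge> 0"
  proof (rule ccontr)
    assume "\<not> B \<ge> 0"
    then have "ennreal B = 0" by (simp add: ennreal_eq_0_iff)
    moreover have "(\<integral>\<^sup>+x. ennreal (exp (l * f x)) \<partial>\<mu>) > 0"
    proof -
      interpret mu: prob_space \<mu> by (rule mu_prob)
      have "(\<integral>\<^sup>+x. ennreal (exp (l * f x)) \<partial>\<mu>) \<noteq> 0"
        using f by (subst nn_integral_0_iff_AE) (auto simp: measurable_cong_sets[OF mu_sets refl])
      then show ?thesis by (simp add: gr_zeroI)
    qed
    ultimately show False using B by simp
  qed
  have cm: "(\<lambda>a. a d) \<in> borel_measurable (PP D)" if "d \<in> E" for d
    using that E by (intro coord_meas[OF mu_sets]) auto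
  have Sm: "(\<lambda>a. \<Sum>d\<in>E. f (a d)) \<in> borel_measurable (PP D)"
    by (intro borel_measurable_sum measurable_compose[OF cm f])
  have "emeasure (PP D) {a \<in> space (PP D). t \<le> (\<Sum>d\<in>E. f (a d))} \<le>
        ennreal (exp (- l * t)) * (\<integral>\<^sup>+a. ennreal (exp (l * (\<Sum>d\<in>E. f (a d)))) * indicator (space (PP D)) a \<partial>PP D)"
    by (intro Chernoff_ineq_nn_integral_ge l) (use Sm in auto)
  also have "(\<integral>\<^sup>+a. ennreal (exp (l * (\<Sum>d\<in>E. f (a d)))) * indicator (space (PP D)) a \<partial>PP D)
      = (\<integral>\<^sup>+a. (\<Prod>d\<in>E. ennreal (exp (l * f (a d)))) \<partial>PP D)"
    by (intro nn_integral_cong)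
       (simp add: sum_distrib_left exp_sum E prod_ennreal)
  also have "\<dots> = (\<Prod>d\<in>E. \<integral>\<^sup>+a. ennreal (exp (l * f (a d))) \<partial>PP D)"
  proof (rule P.indep_vars_nn_integral)
    have g: "(\<lambda>x. ennreal (exp (l * f x))) \<in> borel \<rightarrow>\<^sub>M borel" using f by measurable
    show "P.indep_vars (\<lambda>_. borel) (\<lambda>d a. ennreal (exp (l * f (a d)))) E"
      using P.indep_vars_subset[OF coord_indep[OF g Dne] E(1)] .
  qed (use E in auto)
  also have "\<dots> = (\<Prod>d\<in>E. \<integral>\<^sup>+x. ennreal (exp (l * f x)) \<partial>\<mu>)"
    by (intro prod.cong refl nn_coord) (use E f in auto)
  finally have 1: "emeasure (PP D) {a \<in> space (PP D). t \<le> (\<Sum>d\<in>E. f (a d))} \<le>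
        ennreal (exp (- l * t)) * (\<Prod>d\<in>E. \<integral>\<^sup>+x. ennreal (exp (l * f x)) \<partial>\<mu>)" .
  also have "\<dots> \<le> ennreal (exp (- l * t)) * (\<Prod>d\<in>E. ennreal B)"
    by (intro mult_left_mono prod_mono_ennreal B) auto
  also have "\<dots> = ennreal (exp (- l * t) * B ^ card E)"
    using B0 by (simp add: prod_ennreal ennreal_mult ennreal_power)
  finally show ?thesis
    by (simp add: P.emeasure_eq_measure ennreal_le_iff B0)
qed

end

lemma numeric_bound:
  fixes c :: real
  assumes c: "c > 0" and n: "real n \<ge> 4 / c" "n \<ge> 2"
  shows "4 ^ n * exp (- c * real n ^ 2) \<le> exp (- real n) / 3"
proof -
  have e2: "4 \<le> exp (2::real)"
  proof -
    have "2 \<le> exp (1::real)" using exp_ge_add_one_self[of 1] by simp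
    then have "2 * 2 \<le> exp (1::real) * exp 1" by (intro mult_mono) auto
    then show ?thesis by (simp add: mult_exp_exp)
  qed
  have "ln 4 \<le> ln (exp (2::real))" using e2 by (subst ln_le_cancel_iff) auto
  then have l4: "ln 4 \<le> (2::real)" by simp
  have "ln 3 \<le> ln (4::real)" by (subst ln_le_cancel_iff) auto
  then have l3: "ln 3 \<le> (2::real)" using l4 by linarith
  have cn: "c * real n ^ 2 \<ge> 4 * real n"
  proof -
    have "4 \<le> c * real n" using n(1) c by (simp add: field_simps)
    then have "4 * real n \<le> c * real n * real n" by (intro mult_right_mono) auto
    then show ?thesis by (simp add: power2_eq_square mult_ac)
  qed
  have "(4::real) ^ n = exp (ln 4) ^ n" by simp
  also have "\<dots> = exp (real n * ln 4)" by (rule exp_of_nat_mult[symmetric])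
  finally have "(4::real) ^ n = exp (real n * ln 4)" .
  then have "4 ^ n * exp (- c * real n ^ 2) = exp (real n * ln 4 - c * real n ^ 2)"
    by (simp add: exp_diff exp_minus field_simps)
  also have "\<dots> \<le> exp (- real n - ln 3)"
  proof -
    have nl: "real n * ln 4 \<le> real n * 2" using l4 by (intro mult_left_mono) auto
    have "real n \<ge> 2" using n(2) by simp
    then have "real n * ln 4 - c * real n ^ 2 \<le> - real n - ln 3" using nl cn l3 by linarith
    then show ?thesis by simp
  qed
  also have "\<dots> = exp (- real n) / 3" by (simp add: exp_diff)
  finally show ?thesis .
qed

definition Dn :: "nat \<Rightarrow> (nat \<times> nat) set" where "Dn n = {..<n} \<times> {..<n}"

definition Pairs :: "real \<Rightarrow> nat \<Rightarrow> (nat set \<times> nat set) set" where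
  "Pairs \<epsilon> n = {(I, J). I \<subseteq> {..<n} \<and> J \<subseteq> {..<n} \<and> (1 - \<epsilon>) * real n \<le> real (card I) \<and> (1 - \<epsilon>) * real n \<le> real (card J)}"

lemma Pairs_sub: "Pairs \<epsilon> n \<subseteq> Pow {..<n} \<times> Pow {..<n}"
  by (auto simp: Pairs_def)

lemma Pairs_finite: "finite (Pairs \<epsilon> n)"
  by (rule finite_subset[OF Pairs_sub]) auto

lemma card_Pairs: "real (card (Pairs \<epsilon> n)) \<le> 4 ^ n"
proof -
  have "card (Pairs \<epsilon> n) \<le> card (Pow {..<n} \<times> Pow {..<n})"
    by (intro card_mono Pairs_sub) auto
  also have "\<dots> = 2 ^ n * 2 ^ n" by (simp add: card_cartesian_product card_Pow)
  also have "\<dots> = 4 ^ n" by (simp flip: power_mult_distrib)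
  finally show ?thesis by (metis of_nat_le_iff of_nat_numeral of_nat_power)
qed

lemma card_E:
  assumes "(I, J) \<in> Pairs \<epsilon> n" "\<epsilon> < 1"
  shows "real (card (I \<times> J)) \<ge> (1 - \<epsilon>)\<^sup>2 * real n ^ 2"
proof -
  have "(1 - \<epsilon>) * real n \<le> real (card I)" "(1 - \<epsilon>) * real n \<le> real (card J)"
    using assms by (auto simp: Pairs_def)
  moreover have "0 \<le> (1 - \<epsilon>) * real n" using assms(2) by simp
  ultimately have "((1 - \<epsilon>) * real n) * ((1 - \<epsilon>) * real n) \<le> real (card I) * real (card J)"
    by (intro mult_mono) auto
  then show ?thesis by (simp add: card_cartesian_product power2_eq_square mult_ac)
qed

context iidsetup
begin

lemma mgf_hoeffding:
  assumes f: "f \<in> borel_measurable borel" and bnd: "\<And>x. f x \<in> {lo..hi}" and l: "l > 0"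
  shows "(\<integral>\<^sup>+x. ennreal (exp (l * ((\<integral>y. f y \<partial>\<mu>) - f x))) \<partial>\<mu>) \<le> ennreal (exp (l\<^sup>2 * (hi - lo)\<^sup>2 / 8))"
proof -
  interpret mu: prob_space \<mu> by (rule mu_prob)
  have fm: "(\<lambda>x. - f x) \<in> borel_measurable \<mu>"
    using f measurable_cong_sets[OF mu_sets refl] by auto
  interpret ib: interval_bounded_random_variable \<mu> "\<lambda>x. - f x" "-hi" "-lo"
    by unfold_locales (use fm bnd in auto)
  have "(\<integral>\<^sup>+x. ennreal (exp (l * (- f x - (\<integral>y. - f y \<partial>\<mu>)))) \<partial>\<mu>) \<le> ennreal (exp (l\<^sup>2 * (- lo - - hi)\<^sup>2 / 8))"
    by (rule ib.Hoeffdings_lemma_nn_integral[OF l])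
  then show ?thesis by (simp add: algebra_simps)
qed

lemma hoeff_union:
  assumes f: "f \<in> borel_measurable borel" and bnd: "\<And>x. f x \<in> {lo..hi}" and lohi: "lo < hi"
    and \<delta>: "\<delta> > 0" and \<epsilon>: "0 < \<epsilon>" "\<epsilon> < 1"
  shows "\<exists>N. \<forall>n\<ge>N. measure (PP (Dn n)) {a \<in> space (PP (Dn n)). \<exists>p\<in>Pairs \<epsilon> n.
            (\<Sum>d\<in>fst p \<times> snd p. f (a d)) \<le> ((\<integral>y. f y \<partial>\<mu>) - \<delta>) * real (card (fst p \<times> snd p))}
          \<le> exp (- real n) / 3"
proof -
  define m where "m = (\<integral>y. f y \<partial>\<mu>)"
  define w where "w = (hi - lo)\<^sup>2 / 8"
  have w: "w > 0" using lohi by (simp add: w_def)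
  define l where "l = \<delta> / (2 * w)"
  have l: "l > 0" using w \<delta> by (simp add: l_def)
  define c where "c = \<delta>\<^sup>2 / (4 * w)"
  have c: "c > 0" using w \<delta> by (simp add: c_def)
  have lc: "l\<^sup>2 * w - l * \<delta> = - c"
    using w by (simp add: l_def c_def power2_eq_square field_simps)
  define c' where "c' = c * (1 - \<epsilon>)\<^sup>2"
  have c': "c' > 0" using c \<epsilon> by (simp add: c'_def)
  define N where "N = max 2 (nat \<lceil>4 / c'\<rceil>)"
  show ?thesis
  proof (intro exI[of _ N] allI impI)
    fix n assume nN: "N \<le> n"
    have n2: "n \<ge> 2" using nN by (simp add: N_def)
    have n4: "real n \<ge> 4 / c'" using nN unfolding N_def by linarith
    interpret P: prob_space "PP (Dn n)" by (rule PP_prob)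
    have "(0, 0) \<in> Dn n" using n2 by (simp add: Dn_def)
    then have Dne: "Dn n \<noteq> {}" by auto
    define B where "B = (\<lambda>p. {a \<in> space (PP (Dn n)).
         \<delta> * real (card (fst p \<times> snd p)) \<le> (\<Sum>d\<in>fst p \<times> snd p. (m - f (a d)))})"
    have sub: "{a \<in> space (PP (Dn n)). \<exists>p\<in>Pairs \<epsilon> n.
            (\<Sum>d\<in>fst p \<times> snd p. f (a d)) \<le> (m - \<delta>) * real (card (fst p \<times> snd p))}
          \<subseteq> (\<Union>p\<in>Pairs \<epsilon> n. B p)"
      by (auto simp: B_def sum_subtractf algebra_simps)
    have Bm: "B p \<in> P.events" if "p \<in> Pairs \<epsilon> n" for p
    proof -
      have cm: "(\<lambda>a. a d) \<in> borel_measurable (PP (Dn n))" if "d \<in> fst p \<times> snd p" for d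
        using that \<open>p \<in> Pairs \<epsilon> n\<close> by (intro coord_meas[OF mu_sets]) (auto simp: Pairs_def Dn_def)
      have "(\<lambda>a. \<Sum>d\<in>fst p \<times> snd p. (m - f (a d))) \<in> borel_measurable (PP (Dn n))"
        by (intro borel_measurable_sum borel_measurable_diff borel_measurable_const
              measurable_compose[OF cm f])
      then show ?thesis unfolding B_def by measurable
    qed
    have Bp: "P.prob (B p) \<le> exp (- c' * real n ^ 2)" if p: "p \<in> Pairs \<epsilon> n" for p
    proof -
      obtain I J where IJ: "p = (I, J)" by (cases p)
      have E: "I \<times> J \<subseteq> Dn n" "finite (I \<times> J)" using p IJ
        by (auto simp: Pairs_def Dn_def intro: finite_subset)
      have gm: "(\<lambda>x. m - f x) \<in> borel_measurable borel" using f by measurable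
      have "P.prob (B p) \<le> exp (- l * (\<delta> * real (card (I \<times> J)))) * exp (l\<^sup>2 * w) ^ card (I \<times> J)"
        unfolding B_def IJ fst_conv snd_conv
        by (rule chernoff[OF E Dne gm l]) (use mgf_hoeffding[OF f bnd l] in \<open>simp add: m_def w_def\<close>)
      also have "\<dots> = exp (- c * real (card (I \<times> J)))"
      proof -
        define k where "k = real (card (I \<times> J))"
        have "exp (l\<^sup>2 * w) ^ card (I \<times> J) = exp (k * (l\<^sup>2 * w))"
          by (simp add: k_def exp_of_nat_mult[symmetric])
        moreover have "- l * (\<delta> * k) + k * (l\<^sup>2 * w) = - c * k"
        proof -
          have "- l * (\<delta> * k) + k * (l\<^sup>2 * w) = k * (l\<^sup>2 * w - l * \<delta>)" by (simp add: algebra_simps)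
          then show ?thesis using lc by simp
        qed
        ultimately show ?thesis by (simp add: k_def mult_exp_exp)
      qed
      also have "\<dots> \<le> exp (- c' * real n ^ 2)"
        using card_E[OF p[unfolded IJ] \<epsilon>(2)] c by (simp add: c'_def mult_left_mono mult.assoc)
      finally show ?thesis .
    qed
    have "P.prob {a \<in> space (PP (Dn n)). \<exists>p\<in>Pairs \<epsilon> n.
            (\<Sum>d\<in>fst p \<times> snd p. f (a d)) \<le> (m - \<delta>) * real (card (fst p \<times> snd p))}
        \<le> P.prob (\<Union>p\<in>Pairs \<epsilon> n. B p)"
      by (intro P.finite_measure_mono sub sets.finite_UN Pairs_finite Bm) auto
    also have "\<dots> \<le> (\<Sum>p\<in>Pairs \<epsilon> n. P.prob (B p))"
      by (intro P.finite_measure_subadditive_finite Pairs_finite) (use Bm in auto)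
    also have "\<dots> \<le> (\<Sum>p\<in>Pairs \<epsilon> n. exp (- c' * real n ^ 2))"
      by (intro sum_mono Bp)
    also have "\<dots> \<le> 4 ^ n * exp (- c' * real n ^ 2)"
      using card_Pairs[of \<epsilon> n] by (simp add: mult_right_mono)
    also have "\<dots> \<le> exp (- real n) / 3" by (rule numeric_bound[OF c' n4 n2])
    finally show "P.prob {a \<in> space (PP (Dn n)). \<exists>p\<in>Pairs \<epsilon> n.
            (\<Sum>d\<in>fst p \<times> snd p. f (a d)) \<le> ((\<integral>y. f y \<partial>\<mu>) - \<delta>) * real (card (fst p \<times> snd p))}
          \<le> exp (- real n) / 3" by (simp add: m_def)
  qed
qed

end

context iidsetup
begin

lemma sum_meas:
  fixes g :: "real \<Rightarrow> real"
  assumes "E \<subseteq> Dn n" and g: "g \<in> borel_measurable borel"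
  shows "(\<lambda>a. \<Sum>d\<in>E. g (a d)) \<in> borel_measurable (PP (Dn n))"
proof -
  have cm: "(\<lambda>a. a d) \<in> borel_measurable (PP (Dn n))" if "d \<in> E" for d
    using that assms(1) by (intro coord_meas[OF mu_sets]) auto
  show ?thesis
  proof (rule borel_measurable_sum)
    fix d assume "d \<in> E"
    from measurable_compose[OF cm[OF this] g] show "(\<lambda>a. g (a d)) \<in> borel_measurable (PP (Dn n))" by simp
  qed
qed

lemma bad_meas:
  fixes g :: "real \<Rightarrow> real"
  assumes g: "g \<in> borel_measurable borel"
  shows "{a \<in> space (PP (Dn n)). \<exists>p\<in>Pairs \<epsilon> n. (\<Sum>d\<in>fst p \<times> snd p. g (a d)) \<le> c p} \<in> sets (PP (Dn n))"
proof (rule sets.sets_Collect_finite_Ex[OF _ Pairs_finite])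
  fix p assume p: "p \<in> Pairs \<epsilon> n"
  have "fst p \<times> snd p \<subseteq> Dn n" using p by (auto simp: Pairs_def Dn_def)
  from sum_meas[OF this g] have m: "(\<lambda>a. \<Sum>d\<in>fst p \<times> snd p. g (a d)) \<in> borel_measurable (PP (Dn n))" .
  show "{a \<in> space (PP (Dn n)). (\<Sum>d\<in>fst p \<times> snd p. g (a d)) \<le> c p} \<in> sets (PP (Dn n))"
    by (rule borel_measurable_le[OF m borel_measurable_const])
qed

lemma S_meas:
  assumes n: "n \<ge> 1" and \<epsilon>: "\<epsilon> < 1"
  shows "{a \<in> space (PP (Dn n)). \<forall>I J. I \<subseteq> {..<n} \<and> J \<subseteq> {..<n} \<and>
                real (card I) \<ge> (1 - \<epsilon>) * real n \<and> real (card J) \<ge> (1 - \<epsilon>) * real n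
                \<longrightarrow> submatrix_opnorm a I J \<ge> c} \<in> sets (PP (Dn n))"
proof -
  have eq: "{a \<in> space (PP (Dn n)). \<forall>I J. I \<subseteq> {..<n} \<and> J \<subseteq> {..<n} \<and>
                real (card I) \<ge> (1 - \<epsilon>) * real n \<and> real (card J) \<ge> (1 - \<epsilon>) * real n
                \<longrightarrow> submatrix_opnorm a I J \<ge> c}
     = {a \<in> space (PP (Dn n)). \<forall>p\<in>Pairs \<epsilon> n. c \<le> submatrix_opnorm a (fst p) (snd p)}"
    by (auto simp: Pairs_def)
  show ?thesis unfolding eq
  proof (rule sets.sets_Collect_finite_All[OF _ Pairs_finite])
    fix p assume p: "p \<in> Pairs \<epsilon> n"
    obtain I J where IJ: "p = (I, J)" by (cases p)
    have J: "J \<subseteq> {..<n}" "(1 - \<epsilon>) * real n \<le> real (card J)" and I: "I \<subseteq> {..<n}"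
      using p IJ by (auto simp: Pairs_def)
    have "0 < (1 - \<epsilon>) * real n" using n \<epsilon> by simp
    then have "card J > 0" using J(2) by linarith
    then have Jne: "J \<noteq> {}" by auto
    have m: "(\<lambda>a. submatrix_opnorm a I J) \<in> borel_measurable (PP (Dn n))"
      by (rule opnorm_meas[OF mu_sets]) (use I J Jne in \<open>auto intro: finite_subset simp: Dn_def\<close>)
    show "{a \<in> space (PP (Dn n)). c \<le> submatrix_opnorm a (fst p) (snd p)} \<in> sets (PP (Dn n))"
      unfolding IJ fst_conv snd_conv by (rule borel_measurable_le[OF borel_measurable_const m])
  qed
qed

lemma assembly:
  assumes Sm: "S \<in> sets (PP D)" and Bm: "B \<in> sets (PP D)"
    and sub: "space (PP D) - S \<subseteq> B" and pB: "measure (PP D) B \<le> r"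
  shows "measure (PP D) S \<ge> 1 - r"
proof -
  interpret P: prob_space "PP D" by (rule PP_prob)
  have "measure (PP D) (space (PP D) - S) \<le> measure (PP D) B"
    by (rule P.finite_measure_mono[OF sub Bm])
  then show ?thesis using P.prob_compl[OF Sm] pB by linarith
qed

end

lemma det2:
  fixes a :: "nat \<times> nat \<Rightarrow> real"
  assumes fin: "finite I" "finite J" "J \<noteq> {}"
    and sumY: "(\<Sum>d\<in>I \<times> J. min ((a d)\<^sup>2) T) > Q * real (card (I \<times> J))"
    and Q: "Q \<ge> K\<^sup>2 / (1 - \<epsilon>)" and \<epsilon>: "\<epsilon> < 1" and K: "K > 0"
    and cI: "real (card I) \<ge> (1 - \<epsilon>) * real n"
  shows "submatrix_opnorm a I J \<ge> K * sqrt (real n)"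
proof -
  define opn where "opn = submatrix_opnorm a I J"
  have opn0: "opn \<ge> 0" unfolding opn_def by (rule opnorm_nonneg[OF fin])
  have col: "(\<Sum>i\<in>I. (a (i, j))\<^sup>2) \<le> opn\<^sup>2" if "j \<in> J" for j
  proof -
    have "L2_set (\<lambda>i. a (i, j)) I \<le> opn" unfolding opn_def by (rule col_le_opnorm[OF fin(1,2) that])
    then have "(L2_set (\<lambda>i. a (i, j)) I)\<^sup>2 \<le> opn\<^sup>2" by (intro power_mono) auto
    then show ?thesis unfolding L2_set_def by (simp add: sum_nonneg)
  qed
  have "(\<Sum>d\<in>I \<times> J. min ((a d)\<^sup>2) T) \<le> (\<Sum>d\<in>I \<times> J. (a d)\<^sup>2)" by (intro sum_mono) auto
  also have "\<dots> = (\<Sum>j\<in>J. \<Sum>i\<in>I. (a (i, j))\<^sup>2)"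
  proof -
    have "(\<Sum>i\<in>I. \<Sum>j\<in>J. (a (i, j))\<^sup>2) = (\<Sum>d\<in>I \<times> J. (a d)\<^sup>2)"
      by (simp add: sum.cartesian_product)
    then show ?thesis by (simp add: sum.swap[of _ I J])
  qed
  also have "\<dots> \<le> (\<Sum>j\<in>J. opn\<^sup>2)" by (intro sum_mono col)
  also have "\<dots> = real (card J) * opn\<^sup>2" by simp
  finally have "Q * (real (card I) * real (card J)) < real (card J) * opn\<^sup>2"
    using sumY by (simp add: card_cartesian_product)
  then have lt: "Q * real (card I) < opn\<^sup>2"
    using fin by (simp add: mult_ac card_gt_0_iff mult_less_cancel_left_pos)
  have "K\<^sup>2 / (1 - \<epsilon>) * ((1 - \<epsilon>) * real n) \<le> Q * real (card I)"
  proof -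
    have "0 \<le> K\<^sup>2 / (1 - \<epsilon>)" using \<epsilon> by simp
    then have "0 \<le> Q" using Q by linarith
    then show ?thesis using Q cI \<epsilon> by (intro mult_mono) auto
  qed
  then have "K\<^sup>2 * real n \<le> Q * real (card I)" using \<epsilon> by simp
  then have "K\<^sup>2 * real n \<le> opn\<^sup>2" using lt by linarith
  then have "sqrt (K\<^sup>2 * real n) \<le> sqrt (opn\<^sup>2)" by (rule real_sqrt_le_mono)
  then show ?thesis using opn0 K by (simp add: real_sqrt_mult opn_def)
qed

context iidsetup
begin

lemma bm: "h \<in> borel_measurable borel \<Longrightarrow> h \<in> borel_measurable \<mu>"
  using measurable_cong_sets[OF mu_sets refl] by blast

lemma trunc_big:
  assumes ni: "\<not> integrable \<mu> (\<lambda>x. x\<^sup>2)"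
  shows "\<exists>T>0. (\<integral>x. min (x\<^sup>2) T \<partial>\<mu>) \<ge> C"
proof (rule ccontr)
  interpret mu: prob_space \<mu> by (rule mu_prob)
  assume "\<not> ?thesis"
  then have lt: "(\<integral>x. min (x\<^sup>2) T \<partial>\<mu>) < C" if "T > 0" for T using that by force
  define f where "f = (\<lambda>k x. ennreal (min (x\<^sup>2) (real (Suc k))))"
  have inc: "incseq f" unfolding f_def incseq_def le_fun_def
    by (auto intro!: ennreal_leI)
  have fm: "f k \<in> borel_measurable \<mu>" for k unfolding f_def by (intro bm) measurable
  have sup: "(SUP k. f k x) = ennreal (x\<^sup>2)" for x
  proof (rule antisym)
    show "(SUP k. f k x) \<le> ennreal (x\<^sup>2)" unfolding f_def by (intro SUP_least ennreal_leI) auto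
    obtain k :: nat where "x\<^sup>2 \<le> real k" using real_arch_simple by blast
    then have "f k x = ennreal (x\<^sup>2)" unfolding f_def by (simp add: min_def)
    then show "ennreal (x\<^sup>2) \<le> (SUP k. f k x)" by (metis SUP_upper UNIV_I)
  qed
  have fint: "integral\<^sup>N \<mu> (f k) \<le> ennreal C" for k
  proof -
    have int: "integrable \<mu> (\<lambda>x. min (x\<^sup>2) (real (Suc k)))"
      by (rule mu.integrable_const_bound[where B="real (Suc k)"]) (auto intro: bm)
    have "integral\<^sup>N \<mu> (f k) = ennreal (\<integral>x. min (x\<^sup>2) (real (Suc k)) \<partial>\<mu>)"
      unfolding f_def by (rule nn_integral_eq_integral[OF int]) auto
    also have "\<dots> \<le> ennreal C" using lt[of "real (Suc k)"] by (intro ennreal_leI) auto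
    finally show ?thesis .
  qed
  have "(\<integral>\<^sup>+x. ennreal (x\<^sup>2) \<partial>\<mu>) = (SUP k. integral\<^sup>N \<mu> (f k))"
    using nn_integral_monotone_convergence_SUP[OF inc fm] by (simp add: sup)
  also have "\<dots> \<le> ennreal C" by (intro SUP_least fint)
  finally have "(\<integral>\<^sup>+x. ennreal (norm (x\<^sup>2)) \<partial>\<mu>) < \<infinity>" by (simp add: le_less_trans)
  then have "integrable \<mu> (\<lambda>x. x\<^sup>2)" by (intro integrableI_bounded) (auto intro: bm)
  then show False using ni by simp
qed

lemma case2:
  assumes ni: "\<not> integrable \<mu> (\<lambda>x. x\<^sup>2)" and \<epsilon>: "0 < \<epsilon>" "\<epsilon> < 1" and K: "0 < K"
  shows "\<exists>N. \<forall>n\<ge>N. measure (PP (Dn n))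
             {a \<in> space (PP (Dn n)).
                \<forall>I J. I \<subseteq> {..<n} \<and> J \<subseteq> {..<n} \<and>
                      real (card I) \<ge> (1 - \<epsilon>) * real n \<and> real (card J) \<ge> (1 - \<epsilon>) * real n
                      \<longrightarrow> submatrix_opnorm a I J \<ge> K * sqrt (real n)}
           \<ge> 1 - exp (- real n)"
proof -
  obtain T where T: "T > 0" "(\<integral>x. min (x\<^sup>2) T \<partial>\<mu>) \<ge> K\<^sup>2 / (1 - \<epsilon>) + 1"
    using trunc_big[OF ni] by blast
  define Y where "Y = (\<lambda>x::real. min (x\<^sup>2) T)"
  have Ym: "Y \<in> borel_measurable borel" unfolding Y_def by measurable
  have Yb: "Y x \<in> {0..T}" for x using T by (auto simp: Y_def)
  obtain N0 where N0: "\<forall>n\<ge>N0. measure (PP (Dn n)) {a \<in> space (PP (Dn n)). \<exists>p\<in>Pairs \<epsilon> n.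
            (\<Sum>d\<in>fst p \<times> snd p. Y (a d)) \<le> ((\<integral>y. Y y \<partial>\<mu>) - 1) * real (card (fst p \<times> snd p))}
          \<le> exp (- real n) / 3"
    using hoeff_union[OF Ym Yb T(1) zero_less_one \<epsilon>] by blast
  show ?thesis
  proof (intro exI[of _ "max N0 1"] allI impI)
    fix n assume n: "max N0 1 \<le> n"
    define Bad where "Bad = {a \<in> space (PP (Dn n)). \<exists>p\<in>Pairs \<epsilon> n.
            (\<Sum>d\<in>fst p \<times> snd p. Y (a d)) \<le> ((\<integral>y. Y y \<partial>\<mu>) - 1) * real (card (fst p \<times> snd p))}"
    show "measure (PP (Dn n)) {a \<in> space (PP (Dn n)).
                \<forall>I J. I \<subseteq> {..<n} \<and> J \<subseteq> {..<n} \<and>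
                      real (card I) \<ge> (1 - \<epsilon>) * real n \<and> real (card J) \<ge> (1 - \<epsilon>) * real n
                      \<longrightarrow> submatrix_opnorm a I J \<ge> K * sqrt (real n)} \<ge> 1 - exp (- real n)"
    proof (rule assembly[OF S_meas _ _ _])
      show "1 \<le> n" using n by simp
      show "\<epsilon> < 1" by fact
      show "Bad \<in> sets (PP (Dn n))" unfolding Bad_def by (rule bad_meas[OF Ym])
      show "measure (PP (Dn n)) Bad \<le> exp (- real n)"
      proof -
        have "measure (PP (Dn n)) Bad \<le> exp (- real n) / 3" using N0 n unfolding Bad_def by simp
        moreover have "exp (- real n) > 0" by simp
        ultimately show ?thesis by linarith
      qed
      show "space (PP (Dn n)) - {a \<in> space (PP (Dn n)).
                \<forall>I J. I \<subseteq> {..<n} \<and> J \<subseteq> {..<n} \<and>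
                      real (card I) \<ge> (1 - \<epsilon>) * real n \<and> real (card J) \<ge> (1 - \<epsilon>) * real n
                      \<longrightarrow> submatrix_opnorm a I J \<ge> K * sqrt (real n)} \<subseteq> Bad"
      proof
        fix a assume a: "a \<in> space (PP (Dn n)) - {a \<in> space (PP (Dn n)).
                \<forall>I J. I \<subseteq> {..<n} \<and> J \<subseteq> {..<n} \<and>
                      real (card I) \<ge> (1 - \<epsilon>) * real n \<and> real (card J) \<ge> (1 - \<epsilon>) * real n
                      \<longrightarrow> submatrix_opnorm a I J \<ge> K * sqrt (real n)}"
        then obtain I J where IJ: "I \<subseteq> {..<n}" "J \<subseteq> {..<n}" "real (card I) \<ge> (1 - \<epsilon>) * real n"
           "real (card J) \<ge> (1 - \<epsilon>) * real n" and fail: "\<not> submatrix_opnorm a I J \<ge> K * sqrt (real n)"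
          by auto
        have p: "(I, J) \<in> Pairs \<epsilon> n" using IJ by (auto simp: Pairs_def)
        have fin: "finite I" "finite J" using IJ by (auto intro: finite_subset)
        have "0 < (1 - \<epsilon>) * real n" using n \<epsilon> by simp
        then have "card J > 0" using IJ(4) by linarith
        then have Jne: "J \<noteq> {}" by auto
        have "(\<Sum>d\<in>I \<times> J. Y (a d)) \<le> ((\<integral>y. Y y \<partial>\<mu>) - 1) * real (card (I \<times> J))"
        proof (rule ccontr)
          assume "\<not> ?thesis"
          then have "(\<Sum>d\<in>I \<times> J. min ((a d)\<^sup>2) T) > ((\<integral>y. Y y \<partial>\<mu>) - 1) * real (card (I \<times> J))"
            by (simp add: Y_def)
          from det2[OF fin Jne this _ \<epsilon>(2) K IJ(3)] T(2) fail show False by (simp add: Y_def)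
        qed
        then show "a \<in> Bad" using a p unfolding Bad_def by force
      qed
    qed
  qed
qed

end

definition tb :: "real \<Rightarrow> real \<Rightarrow> real" where "tb T x = (if \<bar>x\<bar> \<le> T then x else 0)"
definition th :: "real \<Rightarrow> real \<Rightarrow> real \<Rightarrow> real" where
  "th T L x = (if T < \<bar>x\<bar> \<and> \<bar>x\<bar> < L then \<bar>x\<bar> else 0)"

lemma tb_meas: "tb T \<in> borel_measurable borel" unfolding tb_def by measurable
lemma th_meas: "th T L \<in> borel_measurable borel" unfolding th_def by measurable
lemma th_nonneg: "th T L x \<ge> 0" by (simp add: th_def)

lemma abs_le_L2_col:
  assumes "finite I" "i \<in> I"
  shows "\<bar>a (i, j)\<bar> \<le> L2_set (\<lambda>i. a (i, j)) I"
proof -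
  have "L2_set (\<lambda>i. a (i, j)) I = L2_set (\<lambda>i. \<bar>a (i, j)\<bar>) I" unfolding L2_set_def by simp
  then show ?thesis using member_le_L2_set[OF assms, of "\<lambda>i. \<bar>a (i, j)\<bar>"] by simp
qed

lemma det1:
  fixes a :: "nat \<times> nat \<Rightarrow> real"
  assumes IJ: "I \<subseteq> {..<n}" "J \<subseteq> {..<n}" "J \<noteq> {}"
    and cI: "real (card I) \<ge> (1 - \<epsilon>) * real n" and cJ: "real (card J) \<ge> (1 - \<epsilon>) * real n"
    and \<epsilon>: "\<epsilon> < 1" and T: "T > 0"
    and G1: "(\<Sum>d\<in>I \<times> J. tb T (a d)) > (mT - \<delta>) * real (card (I \<times> J))"
    and G2: "(\<Sum>d\<in>I \<times> J. - tb T (a d)) > (- mT - \<delta>) * real (card (I \<times> J))"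
    and G3: "(\<Sum>d\<in>{..<n} \<times> {..<n}. th T (K * sqrt (real n)) (a d)) < \<delta> * real n ^ 2"
    and mT: "\<bar>mT\<bar> * (1 - \<epsilon>)\<^sup>2 \<ge> 4 * \<delta>" and \<delta>: "\<delta> > 0"
    and nbig: "sqrt (real n) \<ge> K / (2 * \<delta>)"
  shows "submatrix_opnorm a I J \<ge> K * sqrt (real n)"
proof -
  define L where "L = K * sqrt (real n)"
  define E where "E = I \<times> J"
  have fin: "finite I" "finite J" using IJ by (auto intro: finite_subset)
  define opn where "opn = submatrix_opnorm a I J"
  have opn0: "opn \<ge> 0" unfolding opn_def by (rule opnorm_nonneg[OF fin IJ(3)])
  show ?thesis
  proof (cases "\<exists>d\<in>E. \<bar>a d\<bar> \<ge> L")
    case True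
    then obtain i j where ij: "i \<in> I" "j \<in> J" "\<bar>a (i, j)\<bar> \<ge> L" by (auto simp: E_def)
    have "\<bar>a (i, j)\<bar> \<le> L2_set (\<lambda>i. a (i, j)) I" by (rule abs_le_L2_col[OF fin(1) ij(1)])
    also have "\<dots> \<le> submatrix_opnorm a I J" by (rule col_le_opnorm[OF fin ij(2)])
    finally show ?thesis using ij(3) by (simp add: L_def)
  next
    case False
    have cE: "real (card E) \<le> real n ^ 2"
    proof -
      have "card I \<le> n" "card J \<le> n" using IJ card_mono[of "{..<n}"] by auto
      then have "card I * card J \<le> n * n" by (intro mult_mono) auto
      then show ?thesis by (simp add: E_def card_cartesian_product power2_eq_square flip: of_nat_mult)
    qed
    have cE2: "real (card E) \<ge> (1 - \<epsilon>)\<^sup>2 * real n ^ 2"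
    proof -
      have "0 \<le> (1 - \<epsilon>) * real n" using \<epsilon> by simp
      then have "((1 - \<epsilon>) * real n) * ((1 - \<epsilon>) * real n) \<le> real (card I) * real (card J)"
        using cI cJ by (intro mult_mono) auto
      then show ?thesis by (simp add: E_def card_cartesian_product power2_eq_square mult_ac)
    qed
    have pw: "\<bar>a d - tb T (a d)\<bar> \<le> th T L (a d)" if "d \<in> E" for d
      using False that by (auto simp: tb_def th_def not_le)
    have "\<bar>(\<Sum>d\<in>E. a d) - (\<Sum>d\<in>E. tb T (a d))\<bar> = \<bar>\<Sum>d\<in>E. (a d - tb T (a d))\<bar>"
      by (simp add: sum_subtractf)
    also have "\<dots> \<le> (\<Sum>d\<in>E. \<bar>a d - tb T (a d)\<bar>)" by (rule sum_abs)
    also have "\<dots> \<le> (\<Sum>d\<in>E. th T L (a d))" by (intro sum_mono pw)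
    also have "\<dots> \<le> (\<Sum>d\<in>{..<n} \<times> {..<n}. th T L (a d))"
      using IJ by (intro sum_mono2) (auto simp: E_def th_nonneg)
    finally have d1: "\<bar>(\<Sum>d\<in>E. a d) - (\<Sum>d\<in>E. tb T (a d))\<bar> < \<delta> * real n ^ 2"
      using G3 by (simp add: L_def)
    have d2: "\<bar>(\<Sum>d\<in>E. tb T (a d)) - mT * real (card E)\<bar> \<le> \<delta> * real n ^ 2"
    proof -
      have "(\<Sum>d\<in>E. tb T (a d)) > (mT - \<delta>) * real (card E)" using G1 by (simp add: E_def)
      moreover have "(\<Sum>d\<in>E. tb T (a d)) < (mT + \<delta>) * real (card E)"
        using G2 by (simp add: E_def sum_negf algebra_simps)
      ultimately have "\<bar>(\<Sum>d\<in>E. tb T (a d)) - mT * real (card E)\<bar> \<le> \<delta> * real (card E)"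
        by (simp add: algebra_simps abs_le_iff)
      also have "\<dots> \<le> \<delta> * real n ^ 2" using cE \<delta> by simp
      finally show ?thesis .
    qed
    have "\<bar>mT\<bar> * real (card E) \<ge> 4 * \<delta> * real n ^ 2"
    proof -
      have "4 * \<delta> * real n ^ 2 \<le> \<bar>mT\<bar> * (1 - \<epsilon>)\<^sup>2 * real n ^ 2" using mT by (intro mult_right_mono) auto
      also have "\<dots> \<le> \<bar>mT\<bar> * real (card E)" using cE2 by (simp add: mult.assoc mult_left_mono)
      finally show ?thesis .
    qed
    then have big: "\<bar>\<Sum>d\<in>E. a d\<bar> \<ge> 2 * \<delta> * real n ^ 2"
      using d1 d2 by (simp add: abs_mult)
    have "(\<Sum>d\<in>E. a d) = (\<Sum>i\<in>I. \<Sum>j\<in>J. a (i, j))" by (simp add: E_def sum.cartesian_product)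
    then have "\<bar>\<Sum>d\<in>E. a d\<bar> \<le> opn * sqrt (real (card I) * real (card J))"
      using sum_le_opnorm[OF fin IJ(3), of a] by (simp add: opn_def)
    also have "\<dots> \<le> opn * real n"
    proof -
      have "card I \<le> n" "card J \<le> n" using IJ card_mono[of "{..<n}"] by auto
      then have "real (card I) * real (card J) \<le> real n * real n" by (intro mult_mono) auto
      then have "sqrt (real (card I) * real (card J)) \<le> sqrt (real n * real n)" by (rule real_sqrt_le_mono)
      then show ?thesis using opn0 by (intro mult_left_mono) auto
    qed
    finally have "2 * \<delta> * real n ^ 2 \<le> opn * real n" using big by linarith
    then have "2 * \<delta> * real n * real n \<le> opn * real n" by (simp add: power2_eq_square mult_ac)
    moreover have "n > 0"
    proof (rule ccontr)
      assume "\<not> n > 0" then have "n = 0" by simp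
      then show False using IJ(2,3) by auto
    qed
    ultimately have o: "2 * \<delta> * real n \<le> opn" by simp
    have "K \<le> 2 * \<delta> * sqrt (real n)" using nbig \<delta> by (simp add: field_simps)
    then have "K * sqrt (real n) \<le> 2 * \<delta> * sqrt (real n) * sqrt (real n)" by (intro mult_right_mono) auto
    also have "\<dots> = 2 * \<delta> * real n" by (simp add: mult.assoc)
    finally show ?thesis using o by (simp add: opn_def)
  qed
qed

lemma th_le_sq: "T > 0 \<Longrightarrow> th T L x \<le> x\<^sup>2 / T"
proof -
  assume T: "T > 0"
  show ?thesis
  proof (cases "T < \<bar>x\<bar> \<and> \<bar>x\<bar> < L")
    case True
    then have "T * \<bar>x\<bar> \<le> \<bar>x\<bar> * \<bar>x\<bar>" by (intro mult_right_mono) auto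
    then have "\<bar>x\<bar> \<le> x\<^sup>2 / T" using T by (simp add: field_simps power2_eq_square abs_mult_self_eq)
    then show ?thesis using True by (simp add: th_def)
  qed (use T in \<open>auto simp: th_def\<close>)
qed

lemma tb_diff_le: "T > 0 \<Longrightarrow> \<bar>x - tb T x\<bar> \<le> x\<^sup>2 / T"
proof -
  assume T: "T > 0"
  show ?thesis
  proof (cases "\<bar>x\<bar> \<le> T")
    case False
    then have "T * \<bar>x\<bar> \<le> \<bar>x\<bar> * \<bar>x\<bar>" by (intro mult_right_mono) auto
    then have "\<bar>x\<bar> \<le> x\<^sup>2 / T" using T by (simp add: field_simps power2_eq_square abs_mult_self_eq)
    then show ?thesis using False by (simp add: tb_def)
  qed (simp add: tb_def)
qed

context iidsetup
begin

lemma mgf_th: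
  assumes L: "L > 0" and T: "T > 0" and int2: "integrable \<mu> (\<lambda>x. x\<^sup>2)"
  shows "(\<integral>\<^sup>+x. ennreal (exp ((1 / L) * th T L x)) \<partial>\<mu>) \<le> ennreal (exp ((1 / L / T + (1 / L)\<^sup>2) * (\<integral>x. x\<^sup>2 \<partial>\<mu>)))"
proof -
  interpret mu: prob_space \<mu> by (rule mu_prob)
  define c where "c = 1 / L / T + (1 / L)\<^sup>2"
  have pw: "exp ((1 / L) * th T L x) \<le> 1 + c * x\<^sup>2" for x
  proof -
    define u where "u = (1 / L) * th T L x"
    have u0: "u \<ge> 0" using L by (simp add: u_def th_nonneg)
    have thL: "th T L x \<le> L" using L by (auto simp: th_def)
    have u1: "u \<le> 1" using L thL by (simp add: u_def field_simps)
    have eb: "exp u \<le> 1 + u + u\<^sup>2" by (rule exp_bound[OF u0 u1])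
    have a1: "u \<le> (1 / L) * (x\<^sup>2 / T)" using L th_le_sq[OF T, of L x] unfolding u_def
      by (intro mult_left_mono) auto
    have a2: "u\<^sup>2 \<le> (1 / L)\<^sup>2 * x\<^sup>2"
    proof -
      have "th T L x \<le> \<bar>x\<bar>" by (simp add: th_def)
      then have "(th T L x)\<^sup>2 \<le> \<bar>x\<bar>\<^sup>2" by (intro power_mono th_nonneg)
      then have "(1 / L)\<^sup>2 * (th T L x)\<^sup>2 \<le> (1 / L)\<^sup>2 * x\<^sup>2" by (intro mult_left_mono) auto
      moreover have "u\<^sup>2 = (1 / L)\<^sup>2 * (th T L x)\<^sup>2" by (simp only: u_def power_mult_distrib)
      ultimately show ?thesis by simp
    qed
    have eq: "1 + (1 / L) * (x\<^sup>2 / T) + (1 / L)\<^sup>2 * x\<^sup>2 = 1 + c * x\<^sup>2"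
      by (simp add: c_def field_simps)
    have "exp u \<le> 1 + c * x\<^sup>2" using eb a1 a2 eq by linarith
    then show ?thesis by (simp add: u_def)
  qed
  have intc: "integrable \<mu> (\<lambda>x. 1 + c * x\<^sup>2)" using int2 by auto
  have "(\<integral>\<^sup>+x. ennreal (exp ((1 / L) * th T L x)) \<partial>\<mu>) \<le> (\<integral>\<^sup>+x. ennreal (1 + c * x\<^sup>2) \<partial>\<mu>)"
    by (intro nn_integral_mono ennreal_leI pw)
  also have "\<dots> = ennreal (\<integral>x. 1 + c * x\<^sup>2 \<partial>\<mu>)"
    using L T by (intro nn_integral_eq_integral intc) (auto simp: c_def)
  also have "(\<integral>x. 1 + c * x\<^sup>2 \<partial>\<mu>) = 1 + c * (\<integral>x. x\<^sup>2 \<partial>\<mu>)"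
    using int2 by (simp add: mu.prob_space)
  also have "ennreal (1 + c * (\<integral>x. x\<^sup>2 \<partial>\<mu>)) \<le> ennreal (exp (c * (\<integral>x. x\<^sup>2 \<partial>\<mu>)))"
    by (intro ennreal_leI) simp
  finally show ?thesis by (simp add: c_def)
qed

lemma bad3_bound:
  assumes T: "T > 0" and int2: "integrable \<mu> (\<lambda>x. x\<^sup>2)" and \<delta>: "\<delta> > 0" and K: "K > 0"
    and VT: "(\<integral>x. x\<^sup>2 \<partial>\<mu>) / T \<le> \<delta> / 2"
  shows "\<exists>N. \<forall>n\<ge>N. measure (PP (Dn n)) {a \<in> space (PP (Dn n)).
            \<delta> * real n ^ 2 \<le> (\<Sum>d\<in>Dn n. th T (K * sqrt (real n)) (a d))} \<le> exp (- real n) / 3"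
proof -
  define V where "V = (\<integral>x. x\<^sup>2 \<partial>\<mu>)"
  have V0: "V \<ge> 0" unfolding V_def by (intro integral_nonneg_AE) auto
  define R where "R = (2 * K / \<delta>) * (V / K\<^sup>2 + 2)"
  define N where "N = max 2 (nat \<lceil>R\<^sup>2\<rceil>)"
  show ?thesis
  proof (intro exI[of _ N] allI impI)
    fix n assume nN: "N \<le> n"
    have n2: "n \<ge> 2" using nN by (simp add: N_def)
    have nR: "real n \<ge> R\<^sup>2" using nN unfolding N_def by linarith
    define s where "s = sqrt (real n)"
    have s0: "s > 0" using n2 by (simp add: s_def)
    have ss: "s * s = real n" by (simp add: s_def)
    have sR: "s \<ge> R"
    proof -
      have "sqrt (R\<^sup>2) \<le> s" unfolding s_def by (rule real_sqrt_le_mono[OF nR])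
      then show ?thesis by simp
    qed
    define L where "L = K * s"
    have L: "L > 0" using K s0 by (simp add: L_def)
    define l where "l = 1 / L"
    have l: "l > 0" using L by (simp add: l_def)
    have "(0, 0) \<in> Dn n" using n2 by (simp add: Dn_def)
    then have Dne: "Dn n \<noteq> {}" by auto
    have cD: "card (Dn n) = n ^ 2" by (simp add: Dn_def card_cartesian_product power2_eq_square)
    have "measure (PP (Dn n)) {a \<in> space (PP (Dn n)).
            \<delta> * real n ^ 2 \<le> (\<Sum>d\<in>Dn n. th T L (a d))}
        \<le> exp (- l * (\<delta> * real n ^ 2)) * exp ((l / T + l\<^sup>2) * V) ^ card (Dn n)"
      by (rule chernoff[OF subset_refl _ Dne th_meas l])
         (use mgf_th[OF L T int2] in \<open>auto simp: l_def V_def Dn_def\<close>)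
    also have "\<dots> = exp (- l * (\<delta> * real n ^ 2) + real n ^ 2 * ((l / T + l\<^sup>2) * V))"
      unfolding cD by (simp add: exp_of_nat_mult[symmetric] mult_exp_exp)
    also have "\<dots> \<le> exp (- real n - ln 3)"
    proof -
      have e1: "real n ^ 2 * l = real n * s / K"
        using s0 K by (simp add: l_def L_def power2_eq_square ss[symmetric] field_simps)
      have e2: "real n ^ 2 * l\<^sup>2 = real n / K\<^sup>2"
        using s0 K by (simp add: l_def L_def power2_eq_square ss[symmetric] field_simps)
      have X: "- l * (\<delta> * real n ^ 2) + real n ^ 2 * ((l / T + l\<^sup>2) * V)
             = - \<delta> * (real n ^ 2 * l) + (real n ^ 2 * l) * (V / T) + (real n ^ 2 * l\<^sup>2) * V"
        by (simp add: algebra_simps)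
      have p0: "real n * s / K \<ge> 0" using s0 K by simp
      have "(real n * s / K) * (V / T) \<le> (real n * s / K) * (\<delta> / 2)"
        using VT p0 by (intro mult_left_mono) (auto simp: V_def)
      then have X2: "- l * (\<delta> * real n ^ 2) + real n ^ 2 * ((l / T + l\<^sup>2) * V)
           \<le> - \<delta> / 2 * (real n * s / K) + real n / K\<^sup>2 * V"
        unfolding X e1 e2 by (simp add: algebra_simps)
      have "\<delta> / 2 * (real n * s / K) \<ge> \<delta> / 2 * (real n * R / K)"
        using sR \<delta> K by (intro mult_left_mono divide_right_mono) auto
      also have "\<delta> / 2 * (real n * R / K) = real n * (V / K\<^sup>2 + 2)"
        using \<delta> K by (simp add: R_def field_simps)
      finally have "\<delta> / 2 * (real n * s / K) \<ge> real n / K\<^sup>2 * V + 2 * real n"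
        by (simp add: algebra_simps)
      moreover have "ln 3 \<le> (2::real)"
      proof -
        have "ln 3 \<le> ln (exp (2::real))"
        proof (subst ln_le_cancel_iff)
          have "2 \<le> exp (1::real)" using exp_ge_add_one_self[of 1] by simp
          then have "2 * 2 \<le> exp (1::real) * exp 1" by (intro mult_mono) auto
          then show "3 \<le> exp (2::real)" by (simp add: mult_exp_exp)
        qed auto
        then show ?thesis by simp
      qed
      moreover have "real n \<ge> 2" using n2 by simp
      ultimately show ?thesis using X2 by simp
    qed
    also have "\<dots> = exp (- real n) / 3" by (simp add: exp_diff)
    finally show "measure (PP (Dn n)) {a \<in> space (PP (Dn n)).
            \<delta> * real n ^ 2 \<le> (\<Sum>d\<in>Dn n. th T (K * sqrt (real n)) (a d))} \<le> exp (- real n) / 3"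
      by (simp add: L_def s_def)
  qed
qed

end

context iidsetup
begin

lemma case1:
  assumes int2: "integrable \<mu> (\<lambda>x. x\<^sup>2)" and m0: "(\<integral>x. x \<partial>\<mu>) \<noteq> 0"
    and \<epsilon>: "0 < \<epsilon>" "\<epsilon> < 1" and K: "0 < K"
  shows "\<exists>N. \<forall>n\<ge>N. measure (PP (Dn n))
             {a \<in> space (PP (Dn n)).
                \<forall>I J. I \<subseteq> {..<n} \<and> J \<subseteq> {..<n} \<and>
                      real (card I) \<ge> (1 - \<epsilon>) * real n \<and> real (card J) \<ge> (1 - \<epsilon>) * real n
                      \<longrightarrow> submatrix_opnorm a I J \<ge> K * sqrt (real n)}
           \<ge> 1 - exp (- real n)"
proof -
  interpret mu: prob_space \<mu> by (rule mu_prob)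
  define V where "V = (\<integral>x. x\<^sup>2 \<partial>\<mu>)"
  have V0: "V \<ge> 0" unfolding V_def by (intro integral_nonneg_AE) auto
  define m where "m = (\<integral>x. x \<partial>\<mu>)"
  have m0': "\<bar>m\<bar> > 0" using m0 by (simp add: m_def)
  define \<delta> where "\<delta> = \<bar>m\<bar> * (1 - \<epsilon>)\<^sup>2 / 8"
  have \<delta>: "\<delta> > 0" using m0' \<epsilon> by (simp add: \<delta>_def)
  define T where "T = 1 + 2 * V / \<delta> + 2 * V / \<bar>m\<bar>"
  have t1: "2 * V / \<delta> \<ge> 0" "2 * V / \<bar>m\<bar> \<ge> 0" using V0 \<delta> m0' by auto
  have T: "T > 0" unfolding T_def using t1 by linarith
  have VT1: "V / T \<le> \<delta> / 2"
  proof -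
    have "2 * V / \<delta> \<le> T" using t1 by (simp add: T_def)
    then have "2 * V \<le> T * \<delta>" using \<delta> by (simp add: pos_divide_le_eq)
    then show ?thesis using T by (simp add: divide_le_eq field_simps)
  qed
  have VT2: "V / T \<le> \<bar>m\<bar> / 2"
  proof -
    have "2 * V / \<bar>m\<bar> \<le> T" using t1 by (simp add: T_def)
    then have "2 * V \<le> T * \<bar>m\<bar>" using m0' by (simp add: pos_divide_le_eq)
    then show ?thesis using T by (simp add: divide_le_eq field_simps)
  qed
  have xm: "(\<lambda>x::real. x) \<in> borel_measurable \<mu>" by (intro bm) measurable
  have int1: "integrable \<mu> (\<lambda>x. x)" by (rule mu.square_integrable_imp_integrable[OF xm int2])
  have inttb: "integrable \<mu> (tb T)"
    by (rule mu.integrable_const_bound[where B=T]) (use T in \<open>auto simp: tb_def intro: bm tb_meas\<close>)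
  define mT where "mT = (\<integral>x. tb T x \<partial>\<mu>)"
  have "\<bar>m - mT\<bar> \<le> V / T"
  proof -
    have "m - mT = (\<integral>x. x - tb T x \<partial>\<mu>)" using int1 inttb by (simp add: m_def mT_def)
    also have "\<bar>\<dots>\<bar> \<le> (\<integral>x. x\<^sup>2 / T \<partial>\<mu>)"
      by (rule integral_abs_bound_integral) (use int1 inttb int2 tb_diff_le[OF T] in auto)
    also have "\<dots> = V / T" by (simp add: V_def)
    finally show ?thesis .
  qed
  then have mT4: "\<bar>mT\<bar> * (1 - \<epsilon>)\<^sup>2 \<ge> 4 * \<delta>"
  proof -
    assume "\<bar>m - mT\<bar> \<le> V / T"
    then have "\<bar>mT\<bar> \<ge> \<bar>m\<bar> / 2" using VT2 by linarith
    then have "\<bar>mT\<bar> * (1 - \<epsilon>)\<^sup>2 \<ge> \<bar>m\<bar> / 2 * (1 - \<epsilon>)\<^sup>2" by (intro mult_right_mono) auto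
    then show ?thesis by (simp add: \<delta>_def)
  qed
  have bnd1: "tb T x \<in> {-T..T}" for x using T by (auto simp: tb_def)
  have bnd2: "- tb T x \<in> {-T..T}" for x using T by (auto simp: tb_def)
  have mtb: "(\<lambda>x. - tb T x) \<in> borel_measurable borel" using tb_meas by measurable
  have TT: "- T < T" using T by simp
  from hoeff_union[OF tb_meas bnd1 TT \<delta> \<epsilon>] obtain N1 where N1: "\<forall>n\<ge>N1. measure (PP (Dn n)) {a \<in> space (PP (Dn n)). \<exists>p\<in>Pairs \<epsilon> n.
            (\<Sum>d\<in>fst p \<times> snd p. tb T (a d)) \<le> ((\<integral>y. tb T y \<partial>\<mu>) - \<delta>) * real (card (fst p \<times> snd p))}
          \<le> exp (- real n) / 3" by blast
  from hoeff_union[OF mtb bnd2 TT \<delta> \<epsilon>] obtain N2 where N2: "\<forall>n\<ge>N2. measure (PP (Dn n)) {a \<in> space (PP (Dn n)). \<exists>p\<in>Pairs \<epsilon> n.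
            (\<Sum>d\<in>fst p \<times> snd p. - tb T (a d)) \<le> ((\<integral>y. - tb T y \<partial>\<mu>) - \<delta>) * real (card (fst p \<times> snd p))}
          \<le> exp (- real n) / 3" by blast
  from bad3_bound[OF T int2 \<delta> K VT1[unfolded V_def]] obtain N3 where N3: "\<forall>n\<ge>N3. measure (PP (Dn n)) {a \<in> space (PP (Dn n)).
            \<delta> * real n ^ 2 \<le> (\<Sum>d\<in>Dn n. th T (K * sqrt (real n)) (a d))} \<le> exp (- real n) / 3" by blast
  define N where "N = max (max N1 N2) (max N3 (max 1 (nat \<lceil>(K / (2 * \<delta>))\<^sup>2\<rceil>)))"
  show ?thesis
  proof (intro exI[of _ N] allI impI)
    fix n assume nN: "N \<le> n"
    have n1: "n \<ge> 1" using nN by (simp add: N_def)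
    have nb: "real n \<ge> (K / (2 * \<delta>))\<^sup>2" using nN unfolding N_def by linarith
    have nbig: "sqrt (real n) \<ge> K / (2 * \<delta>)"
    proof -
      have "sqrt ((K / (2 * \<delta>))\<^sup>2) \<le> sqrt (real n)" by (rule real_sqrt_le_mono[OF nb])
      then show ?thesis using K \<delta> by simp
    qed
    define B1 where "B1 = {a \<in> space (PP (Dn n)). \<exists>p\<in>Pairs \<epsilon> n.
            (\<Sum>d\<in>fst p \<times> snd p. tb T (a d)) \<le> ((\<integral>y. tb T y \<partial>\<mu>) - \<delta>) * real (card (fst p \<times> snd p))}"
    define B2 where "B2 = {a \<in> space (PP (Dn n)). \<exists>p\<in>Pairs \<epsilon> n.
            (\<Sum>d\<in>fst p \<times> snd p. - tb T (a d)) \<le> ((\<integral>y. - tb T y \<partial>\<mu>) - \<delta>) * real (card (fst p \<times> snd p))}"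
    define B3 where "B3 = {a \<in> space (PP (Dn n)).
            \<delta> * real n ^ 2 \<le> (\<Sum>d\<in>Dn n. th T (K * sqrt (real n)) (a d))}"
    have B1m: "B1 \<in> sets (PP (Dn n))" unfolding B1_def by (rule bad_meas[OF tb_meas])
    have B2m: "B2 \<in> sets (PP (Dn n))" unfolding B2_def by (rule bad_meas[OF mtb])
    have B3m: "B3 \<in> sets (PP (Dn n))" unfolding B3_def
      by (rule borel_measurable_le[OF borel_measurable_const sum_meas[OF subset_refl th_meas]])
    have p1: "measure (PP (Dn n)) B1 \<le> exp (- real n) / 3" using N1 nN unfolding B1_def N_def by simp
    have p2: "measure (PP (Dn n)) B2 \<le> exp (- real n) / 3" using N2 nN unfolding B2_def N_def by simp
    have p3: "measure (PP (Dn n)) B3 \<le> exp (- real n) / 3" using N3 nN unfolding B3_def N_def by simp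
    interpret P: prob_space "PP (Dn n)" by (rule PP_prob)
    have pB: "measure (PP (Dn n)) (B1 \<union> B2 \<union> B3) \<le> exp (- real n)"
    proof -
      have "measure (PP (Dn n)) (B1 \<union> B2 \<union> B3) \<le> measure (PP (Dn n)) (B1 \<union> B2) + measure (PP (Dn n)) B3"
        using B1m B2m B3m by (intro measure_Un_le) auto
      also have "\<dots> \<le> measure (PP (Dn n)) B1 + measure (PP (Dn n)) B2 + measure (PP (Dn n)) B3"
        using measure_Un_le[OF B1m B2m] by simp
      finally show ?thesis using p1 p2 p3 by linarith
    qed
    show "measure (PP (Dn n)) {a \<in> space (PP (Dn n)).
                \<forall>I J. I \<subseteq> {..<n} \<and> J \<subseteq> {..<n} \<and>
                      real (card I) \<ge> (1 - \<epsilon>) * real n \<and> real (card J) \<ge> (1 - \<epsilon>) * real n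
                      \<longrightarrow> submatrix_opnorm a I J \<ge> K * sqrt (real n)} \<ge> 1 - exp (- real n)"
    proof (rule assembly[OF S_meas[OF n1 \<epsilon>(2)] _ _ pB])
      show "B1 \<union> B2 \<union> B3 \<in> sets (PP (Dn n))" using B1m B2m B3m by auto
      show "space (PP (Dn n)) - {a \<in> space (PP (Dn n)).
                \<forall>I J. I \<subseteq> {..<n} \<and> J \<subseteq> {..<n} \<and>
                      real (card I) \<ge> (1 - \<epsilon>) * real n \<and> real (card J) \<ge> (1 - \<epsilon>) * real n
                      \<longrightarrow> submatrix_opnorm a I J \<ge> K * sqrt (real n)} \<subseteq> B1 \<union> B2 \<union> B3"
      proof
        fix a assume a: "a \<in> space (PP (Dn n)) - {a \<in> space (PP (Dn n)).
                \<forall>I J. I \<subseteq> {..<n} \<and> J \<subseteq> {..<n} \<and>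
                      real (card I) \<ge> (1 - \<epsilon>) * real n \<and> real (card J) \<ge> (1 - \<epsilon>) * real n
                      \<longrightarrow> submatrix_opnorm a I J \<ge> K * sqrt (real n)}"
        then obtain I J where IJ: "I \<subseteq> {..<n}" "J \<subseteq> {..<n}" "real (card I) \<ge> (1 - \<epsilon>) * real n"
           "real (card J) \<ge> (1 - \<epsilon>) * real n" and fail: "\<not> submatrix_opnorm a I J \<ge> K * sqrt (real n)"
          and asp: "a \<in> space (PP (Dn n))"
          by auto
        have p: "(I, J) \<in> Pairs \<epsilon> n" using IJ by (auto simp: Pairs_def)
        have "0 < (1 - \<epsilon>) * real n" using n1 \<epsilon> by simp
        then have "card J > 0" using IJ(4) by linarith
        then have Jne: "J \<noteq> {}" by auto
        show "a \<in> B1 \<union> B2 \<union> B3"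
        proof (rule ccontr)
          assume nb: "a \<notin> B1 \<union> B2 \<union> B3"
          have G1: "(\<Sum>d\<in>I \<times> J. tb T (a d)) > (mT - \<delta>) * real (card (I \<times> J))"
            using nb asp p unfolding B1_def mT_def by force
          have G2: "(\<Sum>d\<in>I \<times> J. - tb T (a d)) > (- mT - \<delta>) * real (card (I \<times> J))"
            using nb asp p unfolding B2_def mT_def by force
          have G3: "(\<Sum>d\<in>{..<n} \<times> {..<n}. th T (K * sqrt (real n)) (a d)) < \<delta> * real n ^ 2"
            using nb asp unfolding B3_def Dn_def by force
          from det1[OF IJ(1,2) Jne IJ(3,4) \<epsilon>(2) T G1 G2 G3 mT4 \<delta> nbig] fail show False by simp
        qed
      qed
    qed
  qed
qed

end

theorem mainTheorem18:
  fixes \<mu> :: "real measure" and \<epsilon> K :: real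
  assumes "prob_space \<mu>" and "sets \<mu> = sets borel"
    and "\<not> integrable \<mu> (\<lambda>x. x\<^sup>2) \<or>
         (integrable \<mu> (\<lambda>x. x\<^sup>2) \<and> (\<integral>x. x \<partial>\<mu>) \<noteq> 0)"
    and "0 < \<epsilon>" and "\<epsilon> < 1" and "0 < K"
  shows "\<exists>n0::nat. \<forall>n>n0.
           measure (iid_matrix \<mu> n)
             {a \<in> space (iid_matrix \<mu> n).
                \<forall>I J. I \<subseteq> {..<n} \<and> J \<subseteq> {..<n} \<and>
                      real (card I) \<ge> (1 - \<epsilon>) * real n \<and> real (card J) \<ge> (1 - \<epsilon>) * real n
                      \<longrightarrow> submatrix_opnorm a I J \<ge> K * sqrt (real n)}
           \<ge> 1 - exp (- real n)"
proof -
  interpret iidsetup \<mu> by (rule iidsetup.intro[OF assms(1,2)])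
  have eq: "iid_matrix \<mu> n = PP (Dn n)" for n by (simp add: iid_matrix_def Dn_def)
  have "\<exists>N. \<forall>n\<ge>N. measure (PP (Dn n))
             {a \<in> space (PP (Dn n)).
                \<forall>I J. I \<subseteq> {..<n} \<and> J \<subseteq> {..<n} \<and>
                      real (card I) \<ge> (1 - \<epsilon>) * real n \<and> real (card J) \<ge> (1 - \<epsilon>) * real n
                      \<longrightarrow> submatrix_opnorm a I J \<ge> K * sqrt (real n)}
           \<ge> 1 - exp (- real n)"
  proof (cases "integrable \<mu> (\<lambda>x. x\<^sup>2)")
    case True
    then have "(\<integral>x. x \<partial>\<mu>) \<noteq> 0" using assms(3) by blast
    from case1[OF True this assms(4,5,6)] show ?thesis .
  next
    case False
    from case2[OF False assms(4,5,6)] show ?thesis .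
  qed
  then obtain N where N: "\<forall>n\<ge>N. measure (PP (Dn n))
             {a \<in> space (PP (Dn n)).
                \<forall>I J. I \<subseteq> {..<n} \<and> J \<subseteq> {..<n} \<and>
                      real (card I) \<ge> (1 - \<epsilon>) * real n \<and> real (card J) \<ge> (1 - \<epsilon>) * real n
                      \<longrightarrow> submatrix_opnorm a I J \<ge> K * sqrt (real n)}
           \<ge> 1 - exp (- real n)" by blast
  show ?thesis unfolding eq using N by (intro exI[of _ N]) auto
qed

end
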